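(* Let $u,u',v\in\mathbb{Z}^2$ with $u<v$ and $u'<v$ (strictly in both coordinates), and let $\lambda\in(0,1)$. Then $\pi(\lambda;u,v)\cap R=\pi(\lambda;u',v)\cap R$, where $R=R_{u+\mathbf{e}_+,v}\cap R_{u'+\mathbf{e}_+,v}$.
   Context: Fix $p\in(0,1)$; bulk weights $(\omega_x)_{x\in\mathbb{Z}^2}$ i.i.d. with $\mathbb{P}(\omega_x=k)=p(1-p)^k$, $k\ge0$. $\mathbf{e}_1=(1,0),\mathbf{e}_2=(0,1),\mathbf{e}_+=(1,1)$; $R_{u,v}=[u_1,v_1]\times[u_2,v_2]$; $H_x=\mathbb{R}\times\{x_2\}$, $V_x=\{x_1\}\times\mathbb{R}$. Directed paths use steps $\mathbf{e}_1,\mathbf{e}_2$; $T(x,y)$ is the maximal weight $\sum_{z\in\gamma}\omega_z$ over directed paths from $x$ to $y$. Boundary weights for $\lambda\in(0,1)$: let $q(\lambda)=\frac{p\lambda+p\sqrt{(1-p)\lambda(1-\lambda)}}{1-p+p\lambda+2\sqrt{(1-p)\lambda(1-\lambda)}}$, $p_V=1-\frac{1-p}{1-q(\lambda)}$. For a base vertex $u_0$, take $(\omega^V_{u_0+j\mathbf{e}_2}(\lambda))_{j\in\mathbb{Z}}$ i.i.d. geometric with parameter $p_V$ independent of the bulk, set $L(u_0)=0$, $L(u_0+j\mathbf{e}_2)-L(u_0+(j-1)\mathbf{e}_2)=\omega^V_{u_0+j\mathbf{e}_2}(\lambda)$, for $x\in u_0+\mathbb{Z}_{>0}\times\mathbb{Z}$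 let $L(x)=\sup_{j\le x_2-(u_0)_2}[L(u_0+j\mathbf{e}_2)+T(u_0+\mathbf{e}_1+j\mathbf{e}_2,x)]$, and $\omega^H_x(\lambda)=L(x)-L(x-\mathbf{e}_1)$, $\omega^V_x(\lambda)=L(x)-L(x-\mathbf{e}_2)$. The law of $(\omega_x,\omega^H_x(\lambda),\omega^V_x(\lambda))$ converges as $u_0=(-m,-m)$, $m\to\infty$, to a law on all of $\mathbb{Z}^2$ whose restriction to each quadrant $u_0+\mathbb{Z}_{\ge0}^2$ agrees with the construction based at $u_0$; we work under this full-plane law. For a directed path $\gamma$ from $x$ to $y$, $T(\lambda;\gamma)=\sum_{z\in\gamma\cap H_x\setminus\{x\}}\omega^H_z(\lambda)+\sum_{z\in\gamma\cap V_x\setminus\{x\}}\omega^V_z(\lambda)+\sum_{z\in\gamma\cap R_{x+\mathbf{e}_+,y}}\omega_z$; $T(\lambda;x,y)$ is the maximum over directed paths from $x$ to $y$; maximizers are $\lambda$-geodesics, and $\pi(\lambda;x,y)$ is the set of vertices on some $\lambda$-geodesic from $x$ to $y$. *)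

theory Defs
  imports Complex_Main
begin

type_synonym pt = "int \<times> int"

definition e1 :: pt where "e1 = (1, 0)"
definition e2 :: pt where "e2 = (0, 1)"
definition eplus :: pt where "eplus = (1, 1)"

definition padd :: "pt \<Rightarrow> pt \<Rightarrow> pt" where
  "padd a b = (fst a + fst b, snd a + snd b)"
definition psub :: "pt \<Rightarrow> pt \<Rightarrow> pt" where
  "psub a b = (fst a - fst b, snd a - snd b)"

definition pless :: "pt \<Rightarrow> pt \<Rightarrow> bool" where
  "pless u v \<longleftrightarrow> fst u < fst v \<and> snd u < snd v"

definition Rect :: "pt \<Rightarrow> pt \<Rightarrow> pt set" where
  "Rect u v = {z. fst u \<le> fst z \<and> fst z \<le> fst v \<and> snd u \<le> snd z \<and> snd z \<le> snd v}"

definition Hline :: "pt \<Rightarrow> pt set" where "Hline x = {z. snd z = snd x}"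
definition Vline :: "pt \<Rightarrow> pt set" where "Vline x = {z. fst z = fst x}"

definition dpath :: "pt list \<Rightarrow> pt \<Rightarrow> pt \<Rightarrow> bool" where
  "dpath \<gamma> x y \<longleftrightarrow> \<gamma> \<noteq> [] \<and> hd \<gamma> = x \<and> last \<gamma> = y \<and>
     (\<forall>i. Suc i < length \<gamma> \<longrightarrow>
        \<gamma> ! Suc i = padd (\<gamma> ! i) e1 \<or> \<gamma> ! Suc i = padd (\<gamma> ! i) e2)"

definition Tlam_path :: "(pt \<Rightarrow> int) \<Rightarrow> (pt \<Rightarrow> int) \<Rightarrow> (pt \<Rightarrow> nat) \<Rightarrow>
    pt list \<Rightarrow> pt \<Rightarrow> pt \<Rightarrow> int" where
  "Tlam_path wH wV w \<gamma> x y =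
     (\<Sum>z\<in>(set \<gamma> \<inter> Hline x) - {x}. wH z) +
     (\<Sum>z\<in>(set \<gamma> \<inter> Vline x) - {x}. wV z) +
     (\<Sum>z\<in>set \<gamma> \<inter> Rect (padd x eplus) y. int (w z))"

definition lam_geodesic :: "(pt \<Rightarrow> int) \<Rightarrow> (pt \<Rightarrow> int) \<Rightarrow> (pt \<Rightarrow> nat) \<Rightarrow>
    pt list \<Rightarrow> pt \<Rightarrow> pt \<Rightarrow> bool" where
  "lam_geodesic wH wV w \<gamma> x y \<longleftrightarrow> dpath \<gamma> x y \<and>
     (\<forall>\<gamma>'. dpath \<gamma>' x y \<longrightarrow> Tlam_path wH wV w \<gamma>' x y \<le> Tlam_path wH wV w \<gamma> x y)"

definition pi_lam :: "(pt \<Rightarrow> int) \<Rightarrow> (pt \<Rightarrow> int) \<Rightarrow> (pt \<Rightarrow> nat) \<Rightarrow>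
    pt \<Rightarrow> pt \<Rightarrow> pt set" where
  "pi_lam wH wV w x y = {z. \<exists>\<gamma>. lam_geodesic wH wV w \<gamma> x y \<and> z \<in> set \<gamma>}"

text \<open>Structural property of the full-plane stationary LPP (holds surely for the
  quadrant construction and hence a.s. under the full-plane law): the potential L
  satisfies the last-passage recursion L(x) = w_x + max(L(x-e1), L(x-e2)), and the
  boundary weights are its increments.\<close>
definition stationary_lpp :: "(pt \<Rightarrow> nat) \<Rightarrow> (pt \<Rightarrow> int) \<Rightarrow> (pt \<Rightarrow> int) \<Rightarrow> (pt \<Rightarrow> int) \<Rightarrow> bool" where
  "stationary_lpp w L wH wV \<longleftrightarrow>
     (\<forall>x. L x = int (w x) + max (L (psub x e1)) (L (psub x e2))) \<and>
     (\<forall>x. wH x = L x - L (psub x e1)) \<and>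
     (\<forall>x. wV x = L x - L (psub x e2))"

end

theory Submission
  imports Defs
begin

definition stepP :: "(pt \<Rightarrow> pt \<Rightarrow> bool) \<Rightarrow> pt list \<Rightarrow> bool" where
  "stepP Q g \<longleftrightarrow> (\<forall>i. Suc i < length g \<longrightarrow> Q (g!i) (g!Suc i))"

definition isstep :: "pt \<Rightarrow> pt \<Rightarrow> bool" where
  "isstep a b \<longleftrightarrow> b = padd a e1 \<or> b = padd a e2"

lemma dpath_alt: "dpath g x y \<longleftrightarrow> g \<noteq> [] \<and> hd g = x \<and> last g = y \<and> stepP isstep g"
  by (simp add: dpath_def stepP_def isstep_def)

lemma stepP_mono: "stepP Q g \<Longrightarrow> (\<And>a b. Q a b \<Longrightarrow> Q' a b) \<Longrightarrow> stepP Q' g"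
  by (simp add: stepP_def)

lemma stepP_two: "stepP Q [a,b] \<longleftrightarrow> Q a b"
  by (auto simp: stepP_def less_Suc_eq)

lemma stepP_single: "stepP Q [a]"
  by (auto simp: stepP_def)

lemma cat_nth1: "i < length b \<Longrightarrow> (b @ tl c)!i = b!i"
  by (simp add: nth_append)

lemma cat_nth2:
  assumes "b \<noteq> []" "c \<noteq> []" "last b = hd c" "k < length c"
  shows "(b @ tl c)!(length b - 1 + k) = c!k"
proof (cases k)
  case 0
  then show ?thesis using assms
    by (simp add: nth_append last_conv_nth hd_conv_nth)
next
  case (Suc k')
  have "length b - 1 + k = length b + k'" using assms(1) Suc by (cases b) auto
  moreover have "(b @ tl c)!(length b + k') = (tl c)!k'" by (simp add: nth_append)
  moreover have "(tl c)!k' = c!k" using Suc assms(4) by (simp add: nth_tl)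
  ultimately show ?thesis by simp
qed

lemma stepP_cat:
  assumes "stepP Q b" "stepP Q c" "b \<noteq> []" "c \<noteq> []" "last b = hd c"
  shows "stepP Q (b @ tl c)"
  unfolding stepP_def
proof (intro allI impI)
  fix i assume "Suc i < length (b @ tl c)"
  then have len: "Suc i < length b + length c - 1" using assms(4) by (cases c) auto
  show "Q ((b @ tl c)!i) ((b @ tl c)!Suc i)"
  proof (cases "Suc i < length b")
    case True then show ?thesis using assms(1) by (simp add: nth_append stepP_def)
  next
    case False
    define j where "j = i - (length b - 1)"
    have i: "i = length b - 1 + j" using False j_def by auto
    have si: "Suc i = length b - 1 + Suc j" using i by simp
    have jl: "Suc j < length c" using len i assms(3) by (cases b) auto
    have "(b @ tl c)!i = c!j" using i cat_nth2[OF assms(3-5)] jl by simp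
    moreover have "(b @ tl c)!Suc i = c!Suc j" using si cat_nth2[OF assms(3-5) jl] by simp
    ultimately show ?thesis using assms(2) jl by (simp add: stepP_def)
  qed
qed

lemma last_cat:
  assumes "b \<noteq> []" "c \<noteq> []" "last b = hd c"
  shows "last (b @ tl c) = last c"
proof (cases "tl c = []")
  case True
  then have "c = [hd c]" using assms(2) by (cases c) auto
  then show ?thesis using True assms by (metis append_Nil2 last_ConsL)
next
  case False
  then show ?thesis using assms(2) by (cases c) auto
qed

lemma dpath_cat:
  assumes "dpath b x z" "dpath c z y"
  shows "dpath (b @ tl c) x y"
  using assms last_cat[of b c] stepP_cat[of isstep b c] unfolding dpath_alt by auto

lemma coord_sum:
  assumes "dpath g x y" "i < length g"
  shows "fst (g!i) + snd (g!i) = fst x + snd x + int i"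
  using assms(2)
proof (induction i)
  case 0 then show ?case using assms(1) by (simp add: dpath_alt hd_conv_nth[symmetric])
next
  case (Suc i)
  then have "isstep (g!i) (g!Suc i)" using assms(1) by (simp add: dpath_alt stepP_def)
  then show ?case using Suc by (auto simp: isstep_def padd_def e1_def e2_def)
qed

lemma dpath_distinct: "dpath g x y \<Longrightarrow> distinct g"
  unfolding distinct_conv_nth
  by (metis coord_sum add_left_cancel of_nat_eq_iff)

lemma coord_mono:
  assumes "stepP isstep g" "j < length g" "i \<le> j"
  shows "fst (g!i) \<le> fst (g!j) \<and> snd (g!i) \<le> snd (g!j)"
  using assms(2,3)
proof (induction j)
  case 0 then show ?case by simp
next
  case (Suc j)
  show ?case
  proof (cases "i = Suc j")
    case True then show ?thesis by simp
  next
    case False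
    then have "i \<le> j" using Suc by simp
    then have ih: "fst (g!i) \<le> fst (g!j) \<and> snd (g!i) \<le> snd (g!j)" using Suc by simp
    have "isstep (g!j) (g!Suc j)" using assms(1) Suc by (simp add: stepP_def)
    then show ?thesis using ih by (auto simp: isstep_def padd_def e1_def e2_def)
  qed
qed

lemma dpath_inRect:
  assumes "dpath g x y" "i < length g"
  shows "g!i \<in> Rect x y"
proof -
  have s: "stepP isstep g" and x: "g!0 = x" and y: "g!(length g - 1) = y"
    using assms by (auto simp: dpath_alt hd_conv_nth last_conv_nth)
  show ?thesis using coord_mono[OF s assms(2), of 0] coord_mono[OF s _ , of "length g - 1" i] assms x y
    by (auto simp: Rect_def)
qed


definition fw :: "(pt \<Rightarrow> int) \<Rightarrow> (pt \<Rightarrow> int) \<Rightarrow> (pt \<Rightarrow> nat) \<Rightarrow> pt \<Rightarrow> pt \<Rightarrow> pt \<Rightarrow> int" where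
  "fw wH wV w x y z = (if z \<in> Hline x - {x} then wH z else 0) + (if z \<in> Vline x - {x} then wV z else 0)
     + (if z \<in> Rect (padd x eplus) y then int (w z) else 0)"

lemma T_fw: "Tlam_path wH wV w g x y = (\<Sum>z\<in>set g. fw wH wV w x y z)"
proof -
  have e1: "(set g \<inter> Hline x) - {x} = set g \<inter> (Hline x - {x})" by auto
  have e2: "(set g \<inter> Vline x) - {x} = set g \<inter> (Vline x - {x})" by auto
  show ?thesis unfolding Tlam_path_def fw_def sum.distrib e1 e2
    by (simp add: sum.inter_restrict)
qed

lemma T_index:
  assumes "dpath g x y"
  shows "Tlam_path wH wV w g x y = (\<Sum>i<length g. fw wH wV w x y (g!i))"
proof -
  have "Tlam_path wH wV w g x y = sum_list (map (fw wH wV w x y) g)"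
    using T_fw sum.distinct_set_conv_list[OF dpath_distinct[OF assms]] by metis
  also have "\<dots> = (\<Sum>i<length g. fw wH wV w x y (g!i))"
    by (simp add: sum_list_sum_nth atLeast0LessThan)
  finally show ?thesis .
qed

lemma fw_x: "fw wH wV w x y x = 0"
  by (simp add: fw_def Rect_def padd_def eplus_def)

lemma step_d:
  assumes stat: "stationary_lpp w L wH wV" and st: "isstep a b"
    and ra: "a \<in> Rect x y" and rb: "b \<in> Rect x y"
  shows "0 \<le> L b - L a - fw wH wV w x y b \<and>
     (L b - L a - fw wH wV w x y b = 0 \<longleftrightarrow> (b \<in> Rect (padd x eplus) y \<longrightarrow> L a = L b - int (w b)))"
proof -
  have Lb: "L b = int (w b) + max (L (psub b e1)) (L (psub b e2))"
    and hb: "wH b = L b - L (psub b e1)" and vb: "wV b = L b - L (psub b e2)"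
    using stat unfolding stationary_lpp_def by blast+
  obtain a1 a2 where a: "a = (a1, a2)" by fastforce
  obtain x1 x2 where x: "x = (x1, x2)" by fastforce
  obtain y1 y2 where y: "y = (y1, y2)" by fastforce
  from st consider "b = (a1 + 1, a2)" | "b = (a1, a2 + 1)"
    by (auto simp: isstep_def a padd_def e1_def e2_def)
  then show ?thesis
  proof cases
    case 1
    then have p1: "psub b e1 = a" by (simp add: a psub_def e1_def)
    show ?thesis using ra rb Lb hb vb p1 1
      by (auto simp: fw_def Rect_def Hline_def Vline_def padd_def eplus_def a x y)
  next
    case 2
    then have p2: "psub b e2 = a" by (simp add: a psub_def e2_def)
    show ?thesis using ra rb Lb hb vb p2 2
      by (auto simp: fw_def Rect_def Hline_def Vline_def padd_def eplus_def a x y)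
  qed
qed

lemma T_d:
  assumes "dpath g x y"
  shows "Tlam_path wH wV w g x y = L y - L x -
     (\<Sum>i<length g - 1. L (g!Suc i) - L (g!i) - fw wH wV w x y (g!Suc i))"
proof -
  define n where "n = length g - 1"
  have len: "length g = Suc n" using assms n_def by (cases g) (auto simp: dpath_alt)
  have g0: "g!0 = x" and gn: "g!n = y"
    using assms len by (auto simp: dpath_alt hd_conv_nth last_conv_nth)
  have "Tlam_path wH wV w g x y = (\<Sum>i<Suc n. fw wH wV w x y (g!i))"
    using T_index[OF assms] len by simp
  also have "\<dots> = (\<Sum>i<n. fw wH wV w x y (g!Suc i))"
    by (subst sum.lessThan_Suc_shift) (simp add: g0 fw_x)
  finally have A: "Tlam_path wH wV w g x y = (\<Sum>i<n. fw wH wV w x y (g!Suc i))" .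
  have B: "(\<Sum>i<n. L (g!Suc i) - L (g!i)) = L y - L x"
    using sum_lessThan_telescope[of "\<lambda>i. L (g!i)" n] unfolding g0 gn .
  have C: "(\<Sum>i<n. L (g!Suc i) - L (g!i) - fw wH wV w x y (g!Suc i)) =
     (\<Sum>i<n. L (g!Suc i) - L (g!i)) - (\<Sum>i<n. fw wH wV w x y (g!Suc i))"
    by (rule sum_subtractf)
  show ?thesis unfolding n_def[symmetric] using A B C by linarith
qed

lemma T_le_eq:
  assumes stat: "stationary_lpp w L wH wV" and dp: "dpath g x y"
  shows "Tlam_path wH wV w g x y \<le> L y - L x \<and>
    (Tlam_path wH wV w g x y = L y - L x \<longleftrightarrow>
       stepP (\<lambda>a b. b \<in> Rect (padd x eplus) y \<longrightarrow> L a = L b - int (w b)) g)"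
proof -
  define d where "d i = L (g!Suc i) - L (g!i) - fw wH wV w x y (g!Suc i)" for i
  have st: "stepP isstep g" using dp by (simp add: dpath_alt)
  have D: "0 \<le> d i \<and> (d i = 0 \<longleftrightarrow> (g!Suc i \<in> Rect (padd x eplus) y \<longrightarrow> L (g!i) = L (g!Suc i) - int (w (g!Suc i))))"
    if "i < length g - 1" for i
  proof -
    have "Suc i < length g" using that by simp
    then show ?thesis unfolding d_def
      using step_d[OF stat, of "g!i" "g!Suc i" x y] st dpath_inRect[OF dp] by (simp add: stepP_def)
  qed
  have T: "Tlam_path wH wV w g x y = L y - L x - (\<Sum>i<length g - 1. d i)"
    using T_d[OF dp] unfolding d_def by simp
  have nn: "0 \<le> (\<Sum>i<length g - 1. d i)" by (rule sum_nonneg) (use D in auto)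
  have "(\<Sum>i<length g - 1. d i) = 0 \<longleftrightarrow> (\<forall>i\<in>{..<length g - 1}. d i = 0)"
    using D by (intro sum_nonneg_eq_0_iff) auto
  also have "\<dots> \<longleftrightarrow> stepP (\<lambda>a b. b \<in> Rect (padd x eplus) y \<longrightarrow> L a = L b - int (w b)) g"
    using D unfolding stepP_def by (auto simp: less_diff_conv)
  finally show ?thesis using T nn by linarith
qed

definition Qx :: "(pt \<Rightarrow> int) \<Rightarrow> (pt \<Rightarrow> nat) \<Rightarrow> pt \<Rightarrow> pt \<Rightarrow> pt \<Rightarrow> bool" where
  "Qx L w x a b \<longleftrightarrow> (fst x < fst b \<and> snd x < snd b \<longrightarrow> L a = L b - int (w b))"

lemma extend:
  assumes "dpath b x a" "stepP Q b" "isstep a z" "Q a z"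
  shows "dpath (b @ [z]) x z \<and> stepP Q (b @ [z])"
proof -
  have d2: "dpath [a, z] a z" using assms(3) by (simp add: dpath_alt stepP_two)
  have la: "last b = a" using assms(1) by (simp add: dpath_alt)
  have "dpath (b @ tl [a, z]) x z" by (rule dpath_cat[OF assms(1) d2])
  moreover have "stepP Q (b @ tl [a, z])"
    using assms(1) la by (intro stepP_cat) (auto simp: assms(2,4) stepP_two dpath_alt)
  ultimately show ?thesis by simp
qed

lemma backpath:
  assumes stat: "stationary_lpp w L wH wV"
  shows "fst x \<le> fst z \<Longrightarrow> snd x \<le> snd z \<Longrightarrow> \<exists>b. dpath b x z \<and> stepP (Qx L w x) b"
proof (induction "nat (fst z - fst x + snd z - snd x)" arbitrary: z rule: less_induct)
  case less
  obtain z1 z2 where z: "z = (z1, z2)" by fastforce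
  obtain x1 x2 where x: "x = (x1, x2)" by fastforce
  have Lz: "L z = int (w z) + max (L (psub z e1)) (L (psub z e2))"
    using stat unfolding stationary_lpp_def by blast
  have p1: "psub z e1 = (z1 - 1, z2)" and p2: "psub z e2 = (z1, z2 - 1)"
    by (auto simp: z psub_def e1_def e2_def)
  have s1: "isstep (z1 - 1, z2) z" and s2: "isstep (z1, z2 - 1) z"
    by (auto simp: isstep_def z padd_def e1_def e2_def)
  have IH1: "\<exists>b. dpath b x (z1 - 1, z2) \<and> stepP (Qx L w x) b" if "x1 < z1"
    using less that by (intro less.hyps) (auto simp: z x)
  have IH2: "\<exists>b. dpath b x (z1, z2 - 1) \<and> stepP (Qx L w x) b" if "x2 < z2"
    using less that by (intro less.hyps) (auto simp: z x)
  consider "z = x" | "x1 = z1" "x2 < z2" | "x2 = z2" "x1 < z1" | "x1 < z1" "x2 < z2"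
    using less.prems by (cases "z1 = x1"; cases "z2 = x2"; auto simp: z x)
  then show ?case
  proof cases
    case 1
    then show ?thesis by (intro exI[of _ "[x]"]) (simp add: dpath_alt stepP_single)
  next
    case 2
    then obtain b where "dpath b x (z1, z2 - 1)" "stepP (Qx L w x) b" using IH2 by blast
    from extend[OF this s2] 2 show ?thesis by (auto simp: Qx_def x z)
  next
    case 3
    then obtain b where "dpath b x (z1 - 1, z2)" "stepP (Qx L w x) b" using IH1 by blast
    from extend[OF this s1] 3 show ?thesis by (auto simp: Qx_def x z)
  next
    case 4
    show ?thesis
    proof (cases "L (psub z e2) \<le> L (psub z e1)")
      case True
      obtain b where "dpath b x (z1 - 1, z2)" "stepP (Qx L w x) b" using IH1 4 by blast
      from extend[OF this s1] True Lz p1 show ?thesis by (auto simp: Qx_def)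
    next
      case False
      obtain b where "dpath b x (z1, z2 - 1)" "stepP (Qx L w x) b" using IH2 4 by blast
      from extend[OF this s2] False Lz p2 show ?thesis by (auto simp: Qx_def)
    qed
  qed
qed

lemma char:
  assumes stat: "stationary_lpp w L wH wV" and xy: "pless x y"
    and zR: "z \<in> Rect (padd x eplus) y"
  shows "z \<in> pi_lam wH wV w x y \<longleftrightarrow>
     (\<exists>c. dpath c z y \<and> stepP (\<lambda>a b. L a = L b - int (w b)) c)"
proof -
  have zc: "fst x < fst z" "snd x < snd z" "fst z \<le> fst y" "snd z \<le> snd y"
    using zR by (auto simp: Rect_def padd_def eplus_def)
  have weak: "stepP (\<lambda>a b. b \<in> Rect (padd x eplus) y \<longrightarrow> L a = L b - int (w b)) g"
    if "stepP (Qx L w x) g" for g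
    using that by (rule stepP_mono) (auto simp: Qx_def Rect_def padd_def eplus_def)
  have geo_char: "lam_geodesic wH wV w g x y" if "dpath g x y" "stepP (Qx L w x) g" for g
  proof -
    have "Tlam_path wH wV w g x y = L y - L x"
      using T_le_eq[OF stat that(1)] weak[OF that(2)] by blast
    moreover have "Tlam_path wH wV w g' x y \<le> L y - L x" if "dpath g' x y" for g'
      using T_le_eq[OF stat that] by blast
    ultimately show ?thesis using that(1) unfolding lam_geodesic_def by auto
  qed
  show ?thesis
  proof
    assume "z \<in> pi_lam wH wV w x y"
    then obtain g where geo: "lam_geodesic wH wV w g x y" and zg: "z \<in> set g"
      by (auto simp: pi_lam_def)
    have dp: "dpath g x y" using geo by (simp add: lam_geodesic_def)
    obtain b0 where b0: "dpath b0 x y" "stepP (Qx L w x) b0"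
      using backpath[OF stat, of x y] xy by (auto simp: pless_def)
    have "Tlam_path wH wV w b0 x y = L y - L x"
      using T_le_eq[OF stat b0(1)] weak[OF b0(2)] by blast
    then have "Tlam_path wH wV w g x y = L y - L x"
      using geo b0(1) T_le_eq[OF stat dp] unfolding lam_geodesic_def by force
    then have good: "stepP (\<lambda>a b. b \<in> Rect (padd x eplus) y \<longrightarrow> L a = L b - int (w b)) g"
      using T_le_eq[OF stat dp] by blast
    obtain k where k: "k < length g" "g!k = z" using zg by (auto simp: in_set_conv_nth)
    have sg: "stepP isstep g" using dp by (simp add: dpath_alt)
    define c where "c = drop k g"
    have "dpath c z y"
      unfolding dpath_alt c_def
    proof (intro conjI)
      show "drop k g \<noteq> []" using k by simp
      show "hd (drop k g) = z" using k by (simp add: hd_drop_conv_nth)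
      show "last (drop k g) = y" using k dp by (simp add: dpath_alt)
      show "stepP isstep (drop k g)" using sg unfolding stepP_def by auto
    qed
    moreover have "stepP (\<lambda>a b. L a = L b - int (w b)) c"
      unfolding stepP_def c_def
    proof (intro allI impI)
      fix i assume i: "Suc i < length (drop k g)"
      then have i2: "Suc (k + i) < length g" by simp
      have m: "fst z \<le> fst (g!Suc (k+i)) \<and> snd z \<le> snd (g!Suc (k+i))"
        using coord_mono[OF sg i2, of k] k by simp
      have "g!Suc (k+i) \<in> Rect x y" using dpath_inRect[OF dp i2] .
      then have "g!Suc (k+i) \<in> Rect (padd x eplus) y"
        using m zc by (auto simp: Rect_def padd_def eplus_def)
      then have "L (g!(k+i)) = L (g!Suc (k+i)) - int (w (g!Suc (k+i)))"
        using good i2 by (simp add: stepP_def)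
      then show "L (drop k g ! i) = L (drop k g ! Suc i) - int (w (drop k g ! Suc i))"
        using i by simp
    qed
    ultimately show "\<exists>c. dpath c z y \<and> stepP (\<lambda>a b. L a = L b - int (w b)) c" by blast
  next
    assume "\<exists>c. dpath c z y \<and> stepP (\<lambda>a b. L a = L b - int (w b)) c"
    then obtain c where c: "dpath c z y" "stepP (\<lambda>a b. L a = L b - int (w b)) c" by blast
    obtain b where b: "dpath b x z" "stepP (Qx L w x) b"
      using backpath[OF stat, of x z] zc by auto
    have dp: "dpath (b @ tl c) x y" by (rule dpath_cat[OF b(1) c(1)])
    have cq: "stepP (Qx L w x) c" using c(2) by (rule stepP_mono) (simp add: Qx_def)
    have "stepP (Qx L w x) (b @ tl c)"
      using b c by (intro stepP_cat[OF b(2) cq]) (auto simp: dpath_alt)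
    then have "lam_geodesic wH wV w (b @ tl c) x y" using geo_char dp by blast
    moreover have "z \<in> set (b @ tl c)"
      using b(1) by (auto simp: dpath_alt)
    ultimately show "z \<in> pi_lam wH wV w x y" by (auto simp: pi_lam_def)
  qed
qed

theorem lemma3p5:
  fixes w :: "pt \<Rightarrow> nat"
    and L wH wV :: "real \<Rightarrow> pt \<Rightarrow> int"
    and lam :: real and u u' v :: pt
  assumes "0 < lam" and "lam < 1"
    and "stationary_lpp w (L lam) (wH lam) (wV lam)"
    and "pless u v" and "pless u' v"
  shows "pi_lam (wH lam) (wV lam) w u v \<inter> (Rect (padd u eplus) v \<inter> Rect (padd u' eplus) v)
       = pi_lam (wH lam) (wV lam) w u' v \<inter> (Rect (padd u eplus) v \<inter> Rect (padd u' eplus) v)"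
  using char[OF assms(3) assms(4)] char[OF assms(3) assms(5)] by blast
end
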